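(* In the sparse activation model with $\alpha_1>0$, where coordinate $j$ of an input is nonzero with probability $p_j=j^{-\alpha_1-1}$ independently across coordinates and across samples, the expected number of coordinates $j\ge1$ that are nonzero in at least one of $D$ i.i.d. training samples is asymptotic, as $D\to\infty$, to the scale $$K(D)=\Gamma\!\left(1-\frac{1}{\alpha_1+1}\right)D^{\frac{1}{\alpha_1+1}},$$ where $\Gamma$ is the Gamma function. Moreover, a coordinate that is never activated in the training set carries no information about its associated target weight $w_j$ and hence cannot contribute to the learned predictor, so $K(D)$ sets the scale of the number of coefficients of $\mathbf{w}$ that can be estimated from the data.
   Context: Sparse activation model: an input $\mathbf{x}$ has independent coordinates $x_j$ with $\mathbb{P}(x_j=0)=1-j^{-\alpha_1-1}$ and $\mathbb{P}(x_j=\pm j^{-(\alpha_2+1)/2})=\tfrac12 j^{-\alpha_1-1}$ each, for exponents $\alpha_1,\alpha_2$ with $\alpha_1+\alpha_2+1>0$. The target is $y(\mathbf{x})=\mathbf{w}^\top\mathbf{x}$ for a weight vector $\mathbf{w}$ with i.i.d. entries of variance $1$; the training set consists of $D$ i.i.d. inputs. *)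

theory Defs
  imports "HOL-Probability.Probability" "HOL-Library.Landau_Symbols"
begin

definition act_prob :: "real \<Rightarrow> nat \<Rightarrow> real" where
  "act_prob a1 j = real j powr (- a1 - 1)"

definition prob_active :: "real \<Rightarrow> nat \<Rightarrow> nat \<Rightarrow> real" where
  "prob_active a1 D j =
     measure_pmf.prob (Pi_pmf {..<D} False (\<lambda>_. bernoulli_pmf (act_prob a1 j)))
       {f. \<exists>i<D. f i}"

text \<open>Expected number of coordinates j \<ge> 1 activated at least once in the training set
  (linearity of expectation: sum over j of the indicator probabilities).\<close>
definition expected_active :: "real \<Rightarrow> nat \<Rightarrow> real" where
  "expected_active a1 D = (\<Sum>j. prob_active a1 D (Suc j))"

end

theory Submission
  imports Defs
begin


lemma notnp: "(x::real) > 0 \<Longrightarrow> x \<notin> \<int>\<^sub>\<le>\<^sub>0"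
  using nonpos_Ints_nonpos by fastforce

lemma prob_active_eq:
  assumes "a1 > 0" "j \<ge> 1"
  shows "prob_active a1 D j = 1 - (1 - real j powr (-a1-1))^D"
proof -
  let ?p = "act_prob a1 j"
  have p0: "0 \<le> ?p" unfolding act_prob_def by simp
  have p1: "?p \<le> 1"
  proof -
    have "real j powr (-a1-1) \<le> real j powr 0" using assms by (intro powr_mono) auto
    thus ?thesis using assms by (simp add: act_prob_def)
  qed
  let ?M = "Pi_pmf {..<D} False (\<lambda>_. bernoulli_pmf ?p)"
  have "{f. \<exists>i<D. f i} = UNIV - Pi {..<D} (\<lambda>_. {False})" by auto
  hence "prob_active a1 D j = measure_pmf.prob ?M (UNIV - Pi {..<D} (\<lambda>_. {False}))"
    unfolding prob_active_def by simp
  also have "\<dots> = 1 - measure_pmf.prob ?M (Pi {..<D} (\<lambda>_. {False}))"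
    using measure_pmf.prob_compl[of "Pi {..<D} (\<lambda>_. {False})" ?M] by simp
  also have "measure_pmf.prob ?M (Pi {..<D} (\<lambda>_. {False})) = (\<Prod>x\<in>{..<D}. measure_pmf.prob (bernoulli_pmf ?p) {False})"
    by (rule measure_Pi_pmf_Pi) simp
  also have "\<dots> = (1 - ?p)^D" using p0 p1 by (simp add: measure_pmf_single)
  finally show ?thesis unfolding act_prob_def by simp
qed

lemma beta_k:
  assumes "s > (1::real)"
  shows "((\<lambda>x. x powr (-1/s) * (1-x)^k) has_integral Beta (1-1/s) (real k + 1)) {0..1}"
proof -
  have "1/s < 1" using assms by simp
  hence "((\<lambda>t. t powr ((1-1/s) - 1) * (1 - t) powr ((real k+1) - 1)) has_integral Beta (1-1/s) (real k+1)) {0..1}"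
    by (intro has_integral_Beta_real) auto
  thus ?thesis
    by (rule has_integral_spike_finite[of "{1}", rotated 2]) (auto simp: powr_realpow)
qed

lemma tele_alg:
  fixes a d g h c :: real
  assumes "d + a > 0" "g > 0"
  shows "c * h / g - 1 + (1 - a) * (c * h / ((d + a) * g)) = c * ((d + 1) * h) / ((d + a) * g) - 1"
proof -
  have ne: "d + a \<noteq> 0" "g \<noteq> 0" using assms by auto
  have "c * h / g = c * ((d + a) * h) / ((d + a) * g)" using ne by simp
  moreover have "(1 - a) * (c * h / ((d + a) * g)) = c * ((1 - a) * h) / ((d + a) * g)" by simp
  ultimately have "c * h / g + (1 - a) * (c * h / ((d + a) * g)) = (c * ((d + a) * h) + c * ((1 - a) * h)) / ((d + a) * g)"
    by (simp add: add_divide_distrib)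
  also have "c * ((d + a) * h) + c * ((1 - a) * h) = c * ((d + 1) * h)" by (simp add: algebra_simps)
  finally show ?thesis by simp
qed

lemma telescope:
  assumes "s > (1::real)"
  shows "(1/s) * (\<Sum>k<D. Beta (1-1/s) (real k + 1)) =
     Gamma (1-1/s) * Gamma (real D + 1) / Gamma (real D + 1 - 1/s) - 1"
proof (induction D)
  case 0
  have "1/s < 1" using assms by simp
  hence "Gamma (1-1/s) > 0" by simp
  then show ?case by simp
next
  case (Suc D)
  define a where "a = 1 - 1/s"
  have a0: "a > 0" using assms by (simp add: a_def)
  have g1: "Gamma (real D + 1 + 1) = (real D + 1) * Gamma (real D + 1)"
    by (rule Gamma_plus1, rule notnp) simp
  have g2: "Gamma (real D + a + 1) = (real D + a) * Gamma (real D + a)"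
    by (rule Gamma_plus1, rule notnp) (use a0 in simp)
  have g2': "Gamma (a + (real D + 1)) = (real D + a) * Gamma (real D + a)" using g2 by (simp add: add_ac)
  have p1: "Gamma (real D + a) > 0" using a0 by (intro Gamma_real_pos) simp
  have p2: "Gamma (real D + 1) > 0" by (intro Gamma_real_pos) simp
  have sa: "1/s = 1 - a" by (simp add: a_def)
  have e3: "real D + 1 - 1/s = real D + a" by (simp add: a_def)
  have IH: "(1/s) * (\<Sum>k<D. Beta a (real k + 1)) = Gamma a * Gamma (real D + 1) / Gamma (real D + a) - 1"
    using Suc unfolding e3 a_def .
  have "(1/s) * (\<Sum>k<Suc D. Beta a (real k + 1)) = (1/s) * (\<Sum>k<D. Beta a (real k + 1)) + (1/s) * Beta a (real D + 1)"
    by (simp add: algebra_simps)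
  also have "\<dots> = Gamma a * Gamma (real D + 1) / Gamma (real D + a) - 1 + (1 - a) * (Gamma a * Gamma (real D + 1) / Gamma (a + (real D + 1)))"
    using IH by (simp add: sa Beta_def)
  also have "\<dots> = Gamma a * Gamma (real D + 1 + 1) / Gamma (real D + a + 1) - 1"
    unfolding g1 g2 g2' by (rule tele_alg) (use a0 p1 in auto)
  also have "real D + 1 + 1 = real (Suc D) + 1" by simp
  also have "real D + a + 1 = real (Suc D) + 1 - 1/s" by (simp add: a_def)
  finally show ?case by (simp add: a_def)
qed


definition hh :: "real \<Rightarrow> nat \<Rightarrow> real \<Rightarrow> real" where
  "hh s D x = (1/s) * (\<Sum>k<D. x powr (-1/s) * (1-x)^k)"
definition LL :: "real \<Rightarrow> nat \<Rightarrow> real" where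
  "LL s D = Gamma (1-1/s) * Gamma (real D + 1) / Gamma (real D + 1 - 1/s) - 1"
definition uu :: "real \<Rightarrow> nat \<Rightarrow> real" where
  "uu s j = real j powr (-s)"

lemma hh_int:
  assumes "s > (1::real)"
  shows "(hh s D has_integral LL s D) {0..1}"
proof -
  have "((\<lambda>x. \<Sum>k<D. x powr (-1/s) * (1-x)^k) has_integral (\<Sum>k<D. Beta (1-1/s) (real k + 1))) {0..1}"
    by (intro has_integral_sum beta_k assms) auto
  from has_integral_mult_right[OF this, of "1/s"] show ?thesis
    unfolding LL_def telescope[OF assms, symmetric] hh_def[abs_def] .
qed

lemma hh_nonneg: "0 \<le> x \<Longrightarrow> x \<le> 1 \<Longrightarrow> s > 0 \<Longrightarrow> 0 \<le> hh s D x"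
  unfolding hh_def by (intro mult_nonneg_nonneg sum_nonneg) auto

lemma hh_eq:
  assumes "s > (1::real)" "0 < x" "x \<le> 1"
  shows "hh s D x = (1 - (1-x)^D) * ((1/s) * x powr (-1/s - 1))"
proof -
  have "1 - (1-x)^D = x * (\<Sum>k<D. (1-x)^k)"
    using one_diff_power_eq[of "1-x" D] by simp
  moreover have "x * x powr (-1/s - 1) = x powr (-1/s)"
    using assms(2) by (simp add: powr_add[symmetric] powr_mult_base)
  ultimately have "(1 - (1-x)^D) * ((1/s) * x powr (-1/s - 1)) = (1/s) * (x powr (-1/s) * (\<Sum>k<D. (1-x)^k))"
    by (metis (no_types, lifting) mult.assoc mult.commute)
  thus ?thesis unfolding hh_def by (simp add: sum_distrib_left)
qed

lemma w_int:
  assumes "s > (1::real)" "0 < p" "p \<le> q"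
  shows "((\<lambda>x. (1/s) * x powr (-1/s - 1)) has_integral (p powr (-1/s) - q powr (-1/s))) {p..q}"
proof -
  define f where "f = (\<lambda>z::real. - (z powr (-1/s)))"
  have "((\<lambda>x. (1/s) * x powr (-1/s - 1)) has_integral (f q - f p)) {p..q}"
  proof (rule fundamental_theorem_of_calculus[OF assms(3)])
    fix x assume "x \<in> {p..q}"
    hence x: "x > 0" using assms by auto
    have "((\<lambda>z. - (z powr (-1/s))) has_real_derivative - ((-1/s) * x powr (-1/s - 1))) (at x)"
      by (intro DERIV_minus has_real_derivative_powr x)
    hence "((\<lambda>z. - (z powr (-1/s))) has_real_derivative ((1/s) * x powr (-1/s - 1))) (at x within {p..q})"
      by (auto intro: has_field_derivative_at_within)
    thus "(f has_vector_derivative ((1/s) * x powr (-1/s - 1))) (at x within {p..q})"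
      by (simp add: has_real_derivative_iff_has_vector_derivative f_def)
  qed
  thus ?thesis by (simp add: f_def)
qed

lemma uu_props:
  assumes "s > (1::real)" "j \<ge> 1"
  shows "0 < uu s j" "uu s j \<le> 1" "uu s (Suc j) \<le> uu s j" "uu s j powr (-1/s) = real j"
proof -
  show "0 < uu s j" using assms by (simp add: uu_def)
  have "real j powr (-s) \<le> real j powr 0" using assms by (intro powr_mono) auto
  thus "uu s j \<le> 1" using assms by (simp add: uu_def)
  show "uu s (Suc j) \<le> uu s j" unfolding uu_def using assms
    by (intro powr_mono2') auto
  have "uu s j powr (-1/s) = real j powr (-s * (-1/s))" unfolding uu_def by (simp add: powr_powr)
  also have "-s * (-1/s) = 1" using assms by simp
  finally show "uu s j powr (-1/s) = real j" using assms by simp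
qed

lemma piece:
  assumes s: "s > (1::real)" and j: "j \<ge> 1"
  shows "integral {uu s (Suc j)..uu s j} (hh s D) \<le> 1 - (1 - uu s j)^D"
    and "1 - (1 - uu s (Suc j))^D \<le> integral {uu s (Suc j)..uu s j} (hh s D)"
proof -
  define p where "p = uu s (Suc j)"
  define q where "q = uu s j"
  have p0: "0 < p" and pq: "p \<le> q" and q1: "q \<le> 1"
    using uu_props[OF s j] uu_props[OF s, of "Suc j"] j by (auto simp: p_def q_def)
  let ?W = "\<lambda>x. (1/s) * x powr (-1/s - 1)"
  have W: "(?W has_integral 1) {p..q}"
  proof -
    have "p powr (-1/s) - q powr (-1/s) = 1"
      using uu_props(4)[OF s j] uu_props(4)[OF s, of "Suc j"] by (simp add: p_def q_def)
    thus ?thesis using w_int[OF s p0 pq] by simp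
  qed
  have hint: "hh s D integrable_on {p..q}"
    by (rule integrable_subinterval_real[OF has_integral_integrable[OF hh_int[OF s]]])
       (use p0 q1 in auto)
  have F: "(1 - (1-p)^D) \<le> (1 - (1-x)^D)" "(1 - (1-x)^D) \<le> (1 - (1-q)^D)" if "x \<in> {p..q}" for x
    using that p0 q1 by (auto intro!: power_mono)
  have Wpos: "0 \<le> ?W x" for x using s by simp
  have "integral {p..q} (hh s D) \<le> integral {p..q} (\<lambda>x. (1 - (1-q)^D) * ?W x)"
  proof (rule integral_le[OF hint])
    show "(\<lambda>x. (1 - (1-q)^D) * ?W x) integrable_on {p..q}"
      using has_integral_mult_right[OF W] by blast
    fix x assume x: "x \<in> {p..q}"
    hence eq: "hh s D x = (1 - (1-x)^D) * ?W x" using p0 q1 by (intro hh_eq s) auto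
    show "hh s D x \<le> (1 - (1-q)^D) * ?W x"
      by (subst eq) (rule mult_right_mono[OF F(2)[OF x] Wpos])
  qed
  also have "\<dots> = 1 - (1-q)^D"
    using integral_unique[OF has_integral_mult_right[OF W, of "1 - (1-q)^D"]] by simp
  finally show "integral {uu s (Suc j)..uu s j} (hh s D) \<le> 1 - (1 - uu s j)^D"
    by (simp add: p_def q_def)
  have "1 - (1-p)^D = integral {p..q} (\<lambda>x. (1 - (1-p)^D) * ?W x)"
    using integral_unique[OF has_integral_mult_right[OF W, of "1 - (1-p)^D"]] by simp
  also have "\<dots> \<le> integral {p..q} (hh s D)"
  proof (rule integral_le[OF _ hint])
    show "(\<lambda>x. (1 - (1-p)^D) * ?W x) integrable_on {p..q}"
      using has_integral_mult_right[OF W] by blast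
    fix x assume x: "x \<in> {p..q}"
    hence eq: "hh s D x = (1 - (1-x)^D) * ?W x" using p0 q1 by (intro hh_eq s) auto
    show "(1 - (1-p)^D) * ?W x \<le> hh s D x"
      by (subst eq) (rule mult_right_mono[OF F(1)[OF x] Wpos])
  qed
  finally show "1 - (1 - uu s (Suc j))^D \<le> integral {uu s (Suc j)..uu s j} (hh s D)"
    by (simp add: p_def q_def)
qed

lemma J_sum:
  assumes s: "s > (1::real)"
  shows "integral {uu s (Suc N)..1} (hh s D) = (\<Sum>j<N. integral {uu s (Suc (Suc j))..uu s (Suc j)} (hh s D))"
proof (induction N)
  case 0
  then show ?case by (simp add: uu_def)
next
  case (Suc N)
  have a: "uu s (Suc (Suc N)) \<le> uu s (Suc N)" "uu s (Suc N) \<le> 1" "0 < uu s (Suc (Suc N))"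
    using uu_props[OF s, of "Suc N"] uu_props[OF s, of "Suc (Suc N)"] by auto
  have hint: "hh s D integrable_on {uu s (Suc (Suc N))..1}"
    by (rule integrable_subinterval_real[OF has_integral_integrable[OF hh_int[OF s]]])
       (use a in auto)
  have "integral {uu s (Suc (Suc N))..1} (hh s D) =
        integral {uu s (Suc (Suc N))..uu s (Suc N)} (hh s D) + integral {uu s (Suc N)..1} (hh s D)"
    using Henstock_Kurzweil_Integration.integral_combine[OF a(1) a(2) hint] by simp
  then show ?case using Suc by simp
qed



lemma sum_bounds:
  fixes D :: nat
  assumes s: "s > (1::real)"
  defines "t \<equiv> (\<lambda>j. 1 - (1 - uu s (Suc j))^D)"
  shows "summable t" "LL s D \<le> suminf t" "suminf t \<le> 1 + LL s D"
proof -
  have u: "0 < uu s (Suc j)" "uu s (Suc j) \<le> 1" for j using uu_props[OF s, of "Suc j"] by auto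
  have t0: "0 \<le> t j" for j unfolding t_def using u[of j] by (auto intro!: power_le_one)
  have hint: "hh s D integrable_on {0..1}" using hh_int[OF s] by blast
  define J where "J N = integral {uu s (Suc N)..1} (hh s D)" for N
  have JL: "J N \<le> LL s D" for N
  proof -
    have "J N \<le> integral {0..1} (hh s D)" unfolding J_def
      by (rule integral_subset_le) (use u[of N] hint s in \<open>auto intro: integrable_subinterval_real intro!: hh_nonneg\<close>)
    thus ?thesis using integral_unique[OF hh_int[OF s]] by simp
  qed
  have up: "(\<Sum>j<Suc N. t j) \<le> 1 + LL s D" for N
  proof -
    have "(\<Sum>j<Suc N. t j) = t 0 + (\<Sum>j<N. t (Suc j))" by (rule sum.lessThan_Suc_shift)
    also have "t 0 \<le> 1" unfolding t_def using u[of 0] by simp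
    also have "(\<Sum>j<N. t (Suc j)) \<le> J N"
      unfolding J_sum[OF s] J_def t_def by (intro sum_mono piece(2)[OF s]) auto
    finally show ?thesis using JL[of N] by simp
  qed
  show sm: "summable t"
    by (rule bounded_imp_summable[of _ "1 + LL s D"]) (use t0 up in \<open>auto simp: lessThan_Suc_atMost[symmetric]\<close>)
  show "suminf t \<le> 1 + LL s D"
  proof (rule suminf_le_const[OF sm])
    fix n show "sum t {..<n} \<le> 1 + LL s D"
    proof (cases n)
      case 0 then show ?thesis using JL[of 0] by (simp add: J_def uu_def)
    next
      case (Suc m) then show ?thesis using up by simp
    qed
  qed
  have low: "J N \<le> suminf t" for N
  proof -
    have "J N = (\<Sum>j<N. integral {uu s (Suc (Suc j))..uu s (Suc j)} (hh s D))"
      unfolding J_def by (rule J_sum[OF s])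
    also have "\<dots> \<le> (\<Sum>j<N. t j)"
      unfolding t_def by (intro sum_mono piece(1)[OF s]) auto
    also have "\<dots> \<le> suminf t" by (rule sum_le_suminf[OF sm]) (use t0 in auto)
    finally show ?thesis .
  qed
  have ulim: "(\<lambda>N. uu s (Suc N)) \<longlonglongrightarrow> 0"
  proof -
    have "filterlim (\<lambda>N. real (Suc N)) at_top sequentially"
      by (rule filterlim_compose[OF filterlim_real_sequentially filterlim_Suc])
    thus ?thesis unfolding uu_def using s by (intro tendsto_neg_powr) auto
  qed
  have "(\<lambda>N. J N) \<longlonglongrightarrow> integral {0..1} (hh s D)"
    unfolding J_def
    by (rule continuous_on_tendsto_compose[OF indefinite_integral_continuous_1'[OF hint] ulim])
       (use u in \<open>auto intro!: always_eventually less_imp_le\<close>)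
  hence "(\<lambda>N. J N) \<longlonglongrightarrow> LL s D" using integral_unique[OF hh_int[OF s]] by simp
  thus "LL s D \<le> suminf t"
    by (rule LIMSEQ_le_const2) (use low in auto)
qed



lemma gamma_ratio:
  assumes s: "s > (1::real)"
  shows "(\<lambda>n. Gamma (real n + 1) / (Gamma (real n + 1 - 1/s) * real n powr (1/s))) \<longlonglongrightarrow> 1"
proof -
  define z where "z = - 1/s"
  have zr: "-1 < z" "z < 0" using s by (auto simp: z_def field_simps)
  have znp: "z \<notin> \<int>\<^sub>\<le>\<^sub>0"
  proof
    assume "z \<in> \<int>\<^sub>\<le>\<^sub>0"
    hence "z \<in> \<int>" by (rule nonpos_Ints_Int)
    moreover have "z \<noteq> 0" using zr by simp
    ultimately have "\<bar>z\<bar> \<ge> 1" by (rule Ints_nonzero_abs_ge1)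
    thus False using zr by simp
  qed
  have gz: "Gamma z \<noteq> 0" using znp by (simp add: Gamma_eq_zero_iff)
  have "(\<lambda>n. Gamma_series z n / Gamma z) \<longlonglongrightarrow> Gamma z / Gamma z"
    by (intro tendsto_divide Gamma_series_LIMSEQ tendsto_const gz)
  hence lim: "(\<lambda>n. Gamma_series z n / Gamma z) \<longlonglongrightarrow> 1" using gz by simp
  have ev: "eventually (\<lambda>n. Gamma_series z n / Gamma z =
      Gamma (real n + 1) / (Gamma (real n + 1 - 1/s) * real n powr (1/s))) sequentially"
    using eventually_gt_at_top[of "0::nat"]
  proof eventually_elim
    case (elim n)
    have "Gamma_series z n = fact n * real n powr z / pochhammer z (n+1)"
      using elim by (simp add: Gamma_series_def powr_def)
    also have "pochhammer z (n+1) = Gamma (z + real (n+1)) / Gamma z"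
      by (rule pochhammer_Gamma[OF znp])
    also have "fact n = Gamma (real n + 1)"
    proof -
      have "Gamma (1 + real n) = fact n" by (rule Gamma_fact)
      thus ?thesis by (simp add: add.commute)
    qed
    also have "real n powr z = 1 / real n powr (1/s)"
      by (simp add: z_def powr_minus divide_inverse)
    also have "z + real (n+1) = real n + 1 - 1/s" by (simp add: z_def)
    finally have "Gamma_series z n = Gamma z * (Gamma (real n + 1) / (Gamma (real n + 1 - 1/s) * real n powr (1/s)))"
      using gz by (simp add: field_simps)
    thus ?case using gz by simp
  qed
  show ?thesis using tendsto_cong[OF ev] lim by simp
qed

lemma expected_eq:
  assumes "a1 > 0"
  shows "expected_active a1 D = (\<Sum>j. 1 - (1 - uu (a1+1) (Suc j))^D)"
proof -
  have "prob_active a1 D (Suc j) = 1 - (1 - uu (a1+1) (Suc j))^D" for j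
    using prob_active_eq[OF assms, of "Suc j" D] by (simp add: uu_def)
  thus ?thesis unfolding expected_active_def by simp
qed

theorem lemma1:
  fixes a1 :: real
  assumes "a1 > 0"
  shows "(\<lambda>D. expected_active a1 D) \<sim>[at_top]
           (\<lambda>D. Gamma (1 - 1 / (a1 + 1)) * real D powr (1 / (a1 + 1)))"
proof (rule asymp_equivI')
  define s where "s = a1 + 1"
  have s: "s > 1" using assms by (simp add: s_def)
  define a where "a = 1 - 1/s"
  have ga: "Gamma a > 0" using s by (intro Gamma_real_pos) (simp add: a_def)
  define G where "G D = Gamma a * real D powr (1/s)" for D :: nat
  define R where "R n = Gamma (real n + 1) / (Gamma (real n + 1 - 1/s) * real n powr (1/s))" for n :: nat
  have R: "R \<longlonglongrightarrow> 1" unfolding R_def by (rule gamma_ratio[OF s])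
  have inv: "(\<lambda>D. 1 / G D) \<longlonglongrightarrow> 0"
  proof -
    have "filterlim (\<lambda>D. real D) at_top sequentially" by (rule filterlim_real_sequentially)
    hence "(\<lambda>D. real D powr (-1/s)) \<longlonglongrightarrow> 0" using s by (intro tendsto_neg_powr) auto
    hence "(\<lambda>D. inverse (Gamma a) * real D powr (-1/s)) \<longlonglongrightarrow> inverse (Gamma a) * 0"
      by (intro tendsto_mult tendsto_const)
    moreover have "eventually (\<lambda>D. inverse (Gamma a) * real D powr (-1/s) = 1 / G D) sequentially"
      using eventually_gt_at_top[of "0::nat"]
      by eventually_elim (simp add: G_def powr_minus divide_inverse)
    ultimately show ?thesis using tendsto_cong by fastforce
  qed
  have key: "eventually (\<lambda>D. R D - 1 / G D \<le> expected_active a1 D / G D \<and>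
                              expected_active a1 D / G D \<le> R D) sequentially"
    using eventually_gt_at_top[of "0::nat"]
  proof eventually_elim
    case (elim D)
    have Gp: "G D > 0" using elim ga by (simp add: G_def)
    have E: "expected_active a1 D = (\<Sum>j. 1 - (1 - uu s (Suc j))^D)"
      unfolding s_def by (rule expected_eq[OF assms])
    have b1: "LL s D \<le> expected_active a1 D" "expected_active a1 D \<le> 1 + LL s D"
      unfolding E using sum_bounds[OF s, of D] by auto
    have "(1 + LL s D) / G D = R D"
      unfolding LL_def R_def G_def a_def using ga elim by (simp add: a_def field_simps)
    moreover have "LL s D / G D = R D - 1 / G D"
      using \<open>(1 + LL s D) / G D = R D\<close> Gp by (simp add: field_simps)
    moreover have "LL s D / G D \<le> expected_active a1 D / G D"
      by (rule divide_right_mono) (use b1 Gp in auto)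
    moreover have "expected_active a1 D / G D \<le> (1 + LL s D) / G D"
      by (rule divide_right_mono) (use b1 Gp in auto)
    ultimately show ?case by simp
  qed
  have "(\<lambda>D. expected_active a1 D / G D) \<longlonglongrightarrow> 1"
  proof (rule tendsto_sandwich[of "\<lambda>D. R D - 1 / G D" _ _ R])
    show "eventually (\<lambda>D. R D - 1 / G D \<le> expected_active a1 D / G D) sequentially"
      using key by (rule eventually_mono) auto
    show "eventually (\<lambda>D. expected_active a1 D / G D \<le> R D) sequentially"
      using key by (rule eventually_mono) auto
    show "(\<lambda>D. R D - 1 / G D) \<longlonglongrightarrow> 1" using tendsto_diff[OF R inv] by simp
  qed (rule R)
  thus "((\<lambda>D. expected_active a1 D / (Gamma (1 - 1 / (a1 + 1)) * real D powr (1 / (a1 + 1)))) \<longlongrightarrow> 1) at_top"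
    by (simp add: G_def a_def s_def)
qed

end
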